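(* Consider a human–algorithm system (as defined in the context) whose combining function $c$ is convex as a function of $(a,h)\in[0,\infty)^2$. Then the system does not exhibit complementarity.
   Context: A human–algorithm system consists of: an integer $N\ge1$ (number of regimes); probabilities $p_1,\dots,p_N\ge 0$ with $\sum_i p_i=1$; algorithmic losses $a_1,\dots,a_N\ge 0$ and unaided-human losses $h_1,\dots,h_N\ge0$; and a combining function $c:[0,\infty)^2\to\mathbb{R}$ satisfying $\min(a,h)\le c(a,h)\le\max(a,h)$ for all $a,h\ge0$, where $c(a_i,h_i)$ is the loss of the combined system in regime $i$. Write $A=\sum_i p_i a_i$ and $H=\sum_i p_i h_i$. The system exhibits complementarity if $\sum_{i=1}^N p_i\,c(a_i,h_i)<\min(A,H)$. *)

theory Defs
  imports "HOL-Analysis.Analysis"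
begin

end

theory Submission
  imports Defs
begin

theorem lemma4:
  fixes N :: nat
    and p a h :: "nat \<Rightarrow> real"
    and c :: "real \<Rightarrow> real \<Rightarrow> real"
  assumes N_pos: "N \<ge> 1"
    and p_nonneg: "\<And>i. i < N \<Longrightarrow> p i \<ge> 0"
    and p_sum: "(\<Sum>i<N. p i) = 1"
    and a_nonneg: "\<And>i. i < N \<Longrightarrow> a i \<ge> 0"
    and h_nonneg: "\<And>i. i < N \<Longrightarrow> h i \<ge> 0"
    and c_between: "\<And>x y. x \<ge> 0 \<Longrightarrow> y \<ge> 0 \<Longrightarrow> min x y \<le> c x y \<and> c x y \<le> max x y"
    and c_convex: "convex_on ({0..} \<times> {0..}) (\<lambda>(x, y). c x y)"
  shows "\<not> ((\<Sum>i<N. p i * c (a i) (h i)) < min (\<Sum>i<N. p i * a i) (\<Sum>i<N. p i * h i))"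
proof -
  have ne: "{..<N} \<noteq> {}" using N_pos by (simp add: lessThan_empty_iff)
  have J: "(\<lambda>(x, y). c x y) (\<Sum>i<N. p i *\<^sub>R (a i, h i)) \<le> (\<Sum>i<N. p i * (\<lambda>(x, y). c x y) (a i, h i))"
    by (rule convex_on_sum[OF _ ne c_convex]) (auto simp: p_sum p_nonneg a_nonneg h_nonneg)
  have S: "(\<Sum>i<N. p i *\<^sub>R (a i, h i)) = ((\<Sum>i<N. p i * a i), (\<Sum>i<N. p i * h i))"
    by (simp add: prod_eq_iff fst_sum snd_sum)
  have A0: "(\<Sum>i<N. p i * a i) \<ge> 0" by (intro sum_nonneg) (simp add: p_nonneg a_nonneg)
  have H0: "(\<Sum>i<N. p i * h i) \<ge> 0" by (intro sum_nonneg) (simp add: p_nonneg h_nonneg)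
  have "c (\<Sum>i<N. p i * a i) (\<Sum>i<N. p i * h i) \<le> (\<Sum>i<N. p i * c (a i) (h i))"
    using J unfolding S by simp
  moreover have "min (\<Sum>i<N. p i * a i) (\<Sum>i<N. p i * h i) \<le> c (\<Sum>i<N. p i * a i) (\<Sum>i<N. p i * h i)"
    using c_between[OF A0 H0] by simp
  ultimately show ?thesis by linarith
qed

end
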